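(* For any group $A$, the assignment $q\mapsto\mathrm{Ker}(q)$ yields a bijection $$\bigsqcup_{B<A}\mathcal Z^1(\mathsf T^l_{\imath_B},(B,m_B))\;\cong\;\mathsf{FAC}(A),$$ sending $q$ in the $B$-summand to $(B,\mathrm{Ker}(q))$, where $B$ ranges over proper subgroups of $A$ and $\imath_B:B\hookrightarrow A$ is the inclusion.
   Context: For a subgroup $B$ of $A$ with inclusion $\imath_B$, $\mathcal Z^1(\mathsf T^l_{\imath_B},(B,m_B))$ is identified with the set of maps $q:A\to B$ satisfying (ZL1) $q(1_A)=1_A$; (ZL2) $q(ba)=b\,q(a)$ for all $a\in A,b\in B$; (ZL3) $q(aa')=q(a\,q(a'))$ for all $a,a'\in A$ (these are exactly the algebra structures on the left $B$-set $B$ for the monad $A\otimes_B-$ on left $B$-sets). $\mathrm{Ker}(q)=\{a:q(a)=1_A\}$. $\mathsf{FAC}(A)$ is the set of pairs $(B,X)$ with $B$ a proper subgroup of $A$, $X$ a subgroup of $A$, $B\cap X=\{1_A\}$ and $BX=A$. *)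

theory Defs
  imports "HOL-Algebra.Algebra" "HOL-Library.FuncSet"
begin

definition Z1_incl :: "('a, 'b) monoid_scheme \<Rightarrow> 'a set \<Rightarrow> ('a \<Rightarrow> 'a) set" where
  "Z1_incl A B = {q \<in> carrier A \<rightarrow>\<^sub>E B.
      q \<one>\<^bsub>A\<^esub> = \<one>\<^bsub>A\<^esub>
    \<and> (\<forall>a\<in>carrier A. \<forall>b\<in>B. q (b \<otimes>\<^bsub>A\<^esub> a) = b \<otimes>\<^bsub>A\<^esub> q a)
    \<and> (\<forall>a\<in>carrier A. \<forall>a'\<in>carrier A. q (a \<otimes>\<^bsub>A\<^esub> a') = q (a \<otimes>\<^bsub>A\<^esub> q a'))}"

definition Ker_q :: "('a, 'b) monoid_scheme \<Rightarrow> ('a \<Rightarrow> 'a) \<Rightarrow> 'a set" where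
  "Ker_q A q = {a \<in> carrier A. q a = \<one>\<^bsub>A\<^esub>}"

definition FAC :: "('a, 'b) monoid_scheme \<Rightarrow> ('a set \<times> 'a set) set" where
  "FAC A = {(H, K). subgroup H A \<and> H \<noteq> carrier A \<and> subgroup K A
      \<and> H \<inter> K = {\<one>\<^bsub>A\<^esub>} \<and> set_mult A H K = carrier A}"

end

theory Submission
  imports Defs
begin

context group
begin

lemma z1_id_on_B:
  assumes q: "q \<in> Z1_incl G B" and B: "subgroup B G" and b: "b \<in> B"
  shows "q b = b"
proof -
  have bc: "b \<in> carrier G" using B b subgroup.subset by blast
  have "q (b \<otimes> \<one>) = b \<otimes> q \<one>" using q b unfolding Z1_incl_def by blast
  also have "q \<one> = \<one>" using q unfolding Z1_incl_def by blast
  finally show ?thesis using bc by simp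
qed

lemma z1_fac:
  assumes q: "q \<in> Z1_incl G B" and B: "subgroup B G" "B \<noteq> carrier G"
  shows "(B, Ker_q G q) \<in> FAC G"
proof -
  have qB: "\<And>a. a \<in> carrier G \<Longrightarrow> q a \<in> B" proof -
    have "q \<in> carrier G \<rightarrow>\<^sub>E B" using q unfolding Z1_incl_def by blast
    thus "\<And>a. a \<in> carrier G \<Longrightarrow> q a \<in> B" by (meson PiE_mem)
  qed
  have q1: "q \<one> = \<one>" using q unfolding Z1_incl_def by blast
  have ql: "\<And>a b. a \<in> carrier G \<Longrightarrow> b \<in> B \<Longrightarrow> q (b \<otimes> a) = b \<otimes> q a"
    using q unfolding Z1_incl_def by blast
  have q3: "\<And>a a'. a \<in> carrier G \<Longrightarrow> a' \<in> carrier G \<Longrightarrow> q (a \<otimes> a') = q (a \<otimes> q a')"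
    using q unfolding Z1_incl_def by blast
  have Bc: "B \<subseteq> carrier G" using B subgroup.subset by blast
  let ?K = "Ker_q G q"
  have K: "subgroup ?K G"
  proof (rule subgroupI)
    show "?K \<subseteq> carrier G" unfolding Ker_q_def by auto
    show "?K \<noteq> {}" using q1 unfolding Ker_q_def by auto
  next
    fix a assume a: "a \<in> ?K"
    hence ac: "a \<in> carrier G" and qa: "q a = \<one>" unfolding Ker_q_def by auto
    have "q (inv a \<otimes> a) = q (inv a \<otimes> q a)" using q3[of "inv a" a] ac by simp
    hence "q (inv a) = \<one>" using qa ac q1 by simp
    thus "inv a \<in> ?K" using ac unfolding Ker_q_def by auto
  next
    fix a b assume a: "a \<in> ?K" and b: "b \<in> ?K"
    hence ac: "a \<in> carrier G" and qa: "q a = \<one>" and bc: "b \<in> carrier G" and qb: "q b = \<one>"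
      unfolding Ker_q_def by auto
    have "q (a \<otimes> b) = q (a \<otimes> q b)" using q3[of a b] ac bc by simp
    hence "q (a \<otimes> b) = \<one>" using qa qb ac by simp
    thus "a \<otimes> b \<in> ?K" using ac bc unfolding Ker_q_def by auto
  qed
  have int: "B \<inter> ?K = {\<one>}"
  proof
    show "B \<inter> ?K \<subseteq> {\<one>}" using z1_id_on_B[OF q B(1)] unfolding Ker_q_def by auto
    show "{\<one>} \<subseteq> B \<inter> ?K" using q1 B(1) subgroup.one_closed unfolding Ker_q_def by auto
  qed
  have prod: "set_mult G B ?K = carrier G"
  proof
    show "set_mult G B ?K \<subseteq> carrier G" using Bc unfolding set_mult_def Ker_q_def by auto
  next
    show "carrier G \<subseteq> set_mult G B ?K"
    proof
      fix a assume ac: "a \<in> carrier G"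
      have qa: "q a \<in> B" using qB ac .
      have qac: "q a \<in> carrier G" using qa Bc by auto
      have iq: "inv (q a) \<in> B" using subgroup.m_inv_closed[OF B(1) qa] .
      have "q (inv (q a) \<otimes> a) = inv (q a) \<otimes> q a" using ql ac iq by simp
      hence "inv (q a) \<otimes> a \<in> ?K" using qac ac unfolding Ker_q_def by auto
      moreover have "a = q a \<otimes> (inv (q a) \<otimes> a)" using qac ac by (simp add: m_assoc[symmetric])
      ultimately show "a \<in> set_mult G B ?K" using qa unfolding set_mult_def by blast
    qed
  qed
  show ?thesis unfolding FAC_def using B K int prod by auto
qed

lemma z1_inj:
  assumes q1: "q1 \<in> Z1_incl G B" and q2: "q2 \<in> Z1_incl G B" and B: "subgroup B G"
    and K: "Ker_q G q1 = Ker_q G q2"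
  shows "q1 = q2"
proof
  fix a
  show "q1 a = q2 a"
  proof (cases "a \<in> carrier G")
    case False
    have h1: "q1 \<in> carrier G \<rightarrow>\<^sub>E B" and h2: "q2 \<in> carrier G \<rightarrow>\<^sub>E B"
      using q1 q2 unfolding Z1_incl_def by blast+
    show ?thesis using PiE_arb[OF h1 False] PiE_arb[OF h2 False] by (rule trans[OF _ sym])
  next
    case ac: True
    have Bc: "B \<subseteq> carrier G" using B subgroup.subset by blast
    have qa: "q1 a \<in> B" proof -
      have "q1 \<in> carrier G \<rightarrow>\<^sub>E B" using q1 unfolding Z1_incl_def by blast
      thus ?thesis using ac by (meson PiE_mem)
    qed
    have qac: "q1 a \<in> carrier G" using qa Bc by auto
    have iq: "inv (q1 a) \<in> B" using subgroup.m_inv_closed[OF B qa] .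
    have ql1: "\<And>x y. x \<in> carrier G \<Longrightarrow> y \<in> B \<Longrightarrow> q1 (y \<otimes> x) = y \<otimes> q1 x"
      using q1 unfolding Z1_incl_def by blast
    have "q1 (inv (q1 a) \<otimes> a) = inv (q1 a) \<otimes> q1 a" using ql1[OF ac iq] .
    hence "inv (q1 a) \<otimes> a \<in> Ker_q G q1" using qac ac unfolding Ker_q_def by auto
    hence k: "q2 (inv (q1 a) \<otimes> a) = \<one>" using K unfolding Ker_q_def by auto
    have "q2 (q1 a \<otimes> (inv (q1 a) \<otimes> a)) = q1 a \<otimes> q2 (inv (q1 a) \<otimes> a)"
    proof -
      have ql2: "\<And>x y. x \<in> carrier G \<Longrightarrow> y \<in> B \<Longrightarrow> q2 (y \<otimes> x) = y \<otimes> q2 x"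
        using q2 unfolding Z1_incl_def by blast
      show ?thesis using ql2[of "inv (q1 a) \<otimes> a" "q1 a"] qa ac qac by simp
    qed
    moreover have "q1 a \<otimes> (inv (q1 a) \<otimes> a) = a" using qac ac by (simp add: m_assoc[symmetric])
    ultimately show ?thesis using k qac by simp
  qed
qed

lemma fac_surj:
  assumes F: "(B, K) \<in> FAC G"
  shows "\<exists>q \<in> Z1_incl G B. Ker_q G q = K"
proof -
  have B: "subgroup B G" and K: "subgroup K G" and int: "B \<inter> K = {\<one>}"
    and prod: "set_mult G B K = carrier G" using F unfolding FAC_def by auto
  have Bc: "B \<subseteq> carrier G" using B subgroup.subset by blast
  have Kc: "K \<subseteq> carrier G" using K subgroup.subset by blast
  have uniq: "\<And>a b1 b2. a \<in> carrier G \<Longrightarrow> b1 \<in> B \<Longrightarrow> b2 \<in> B \<Longrightarrow> inv b1 \<otimes> a \<in> K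
      \<Longrightarrow> inv b2 \<otimes> a \<in> K \<Longrightarrow> b1 = b2"
  proof -
    fix a b1 b2 assume ac: "a \<in> carrier G" and b1: "b1 \<in> B" and b2: "b2 \<in> B"
      and k1: "inv b1 \<otimes> a \<in> K" and k2: "inv b2 \<otimes> a \<in> K"
    have c1: "b1 \<in> carrier G" and c2: "b2 \<in> carrier G" using b1 b2 Bc by auto
    have "(inv b1 \<otimes> a) \<otimes> inv (inv b2 \<otimes> a) \<in> K"
      using subgroup.m_closed[OF K k1 subgroup.m_inv_closed[OF K k2]] .
    moreover have "(inv b1 \<otimes> a) \<otimes> inv (inv b2 \<otimes> a) = inv b1 \<otimes> b2"
      using c1 c2 ac by (simp add: inv_mult_group m_assoc) (simp add: m_assoc[symmetric])
    moreover have "inv b1 \<otimes> b2 \<in> B" using subgroup.m_closed[OF B subgroup.m_inv_closed[OF B b1] b2] .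
    ultimately have "inv b1 \<otimes> b2 = \<one>" using int by auto
    hence "b1 \<otimes> (inv b1 \<otimes> b2) = b1" using c1 by simp
    thus "b1 = b2" using c1 c2 by (simp add: m_assoc[symmetric])
  qed
  have ex: "\<And>a. a \<in> carrier G \<Longrightarrow> \<exists>b\<in>B. inv b \<otimes> a \<in> K"
  proof -
    fix a assume "a \<in> carrier G"
    then obtain b k where b: "b \<in> B" and k: "k \<in> K" and a: "a = b \<otimes> k"
      using prod unfolding set_mult_def by blast
    have "inv b \<otimes> a = k" using a b k Bc Kc by (simp add: m_assoc[symmetric] subsetD)
    thus "\<exists>b\<in>B. inv b \<otimes> a \<in> K" using b k by auto
  qed
  define f where "f a = (THE b. b \<in> B \<and> inv b \<otimes> a \<in> K)" for a
  have fP: "\<And>a. a \<in> carrier G \<Longrightarrow> f a \<in> B \<and> inv (f a) \<otimes> a \<in> K"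
  proof -
    fix a assume ac: "a \<in> carrier G"
    show "f a \<in> B \<and> inv (f a) \<otimes> a \<in> K" unfolding f_def
      apply (rule theI')
      using ex[OF ac] uniq[OF ac] by blast
  qed
  have fU: "\<And>a b. a \<in> carrier G \<Longrightarrow> b \<in> B \<Longrightarrow> inv b \<otimes> a \<in> K \<Longrightarrow> f a = b"
    using fP uniq by blast
  define q where "q = restrict f (carrier G)"
  have qP: "\<And>a. a \<in> carrier G \<Longrightarrow> q a \<in> B \<and> inv (q a) \<otimes> a \<in> K" using fP by (simp add: q_def)
  have qU: "\<And>a b. a \<in> carrier G \<Longrightarrow> b \<in> B \<Longrightarrow> inv b \<otimes> a \<in> K \<Longrightarrow> q a = b"
    using fU by (simp add: q_def)
  have qc: "\<And>a. a \<in> carrier G \<Longrightarrow> q a \<in> carrier G" using qP Bc by blast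
  have "q \<in> Z1_incl G B"
    unfolding Z1_incl_def
  proof (intro CollectI conjI ballI)
    show "q \<in> carrier G \<rightarrow>\<^sub>E B"
    proof (rule PiE_I)
      fix a assume "a \<in> carrier G" thus "q a \<in> B" using qP by blast
    next
      fix a assume "a \<notin> carrier G" thus "q a = undefined" by (simp add: q_def)
    qed
    show "q \<one> = \<one>" using qU[of \<one> \<one>] B K by (simp add: subgroup.one_closed)
  next
    fix a b assume ac: "a \<in> carrier G" and b: "b \<in> B"
    have bc: "b \<in> carrier G" using b Bc by auto
    have "b \<otimes> q a \<in> B" using b qP[OF ac] B by (simp add: subgroup.m_closed)
    moreover have "inv (b \<otimes> q a) \<otimes> (b \<otimes> a) = inv (q a) \<otimes> a"
      using ac bc qc[OF ac] by (simp add: inv_mult_group m_assoc[symmetric]) (simp add: m_assoc)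
    ultimately show "q (b \<otimes> a) = b \<otimes> q a" using qU[of "b \<otimes> a" "b \<otimes> q a"] qP[OF ac] ac bc by simp
  next
    fix a a' assume ac: "a \<in> carrier G" and a'c: "a' \<in> carrier G"
    let ?c = "q (a \<otimes> q a')"
    have m: "a \<otimes> q a' \<in> carrier G" using ac qc[OF a'c] by simp
    have c: "?c \<in> B" "inv ?c \<otimes> (a \<otimes> q a') \<in> K" using qP[OF m] by auto
    have cc: "?c \<in> carrier G" using qc[OF m] .
    have k': "inv (q a') \<otimes> a' \<in> K" using qP[OF a'c] by auto
    have "(inv ?c \<otimes> (a \<otimes> q a')) \<otimes> (inv (q a') \<otimes> a') \<in> K"
      using c(2) k' K by (simp add: subgroup.m_closed)
    moreover have "(inv ?c \<otimes> (a \<otimes> q a')) \<otimes> (inv (q a') \<otimes> a') = inv ?c \<otimes> (a \<otimes> a')"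
      using ac a'c qc[OF a'c] cc by (simp add: m_assoc) (simp add: m_assoc[symmetric])
    ultimately show "q (a \<otimes> a') = ?c" using qU[of "a \<otimes> a'" ?c] c(1) ac a'c by simp
  qed
  moreover have "Ker_q G q = K"
  proof
    show "Ker_q G q \<subseteq> K"
    proof
      fix k assume "k \<in> Ker_q G q"
      hence kc: "k \<in> carrier G" and qk: "q k = \<one>" unfolding Ker_q_def by auto
      have "inv (q k) \<otimes> k \<in> K" using qP[OF kc] by blast
      thus "k \<in> K" using qk kc by simp
    qed
    show "K \<subseteq> Ker_q G q"
    proof
      fix k assume k: "k \<in> K"
      hence kc: "k \<in> carrier G" using Kc by auto
      have "q k = \<one>" using qU[of k \<one>] kc k B by (simp add: subgroup.one_closed)
      thus "k \<in> Ker_q G q" using kc unfolding Ker_q_def by auto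
    qed
  qed
  ultimately show ?thesis by blast
qed

end

theorem theorem4p8:
  fixes A :: "('a, 'b) monoid_scheme"
  assumes "group A"
  shows "bij_betw (\<lambda>(B, q). (B, Ker_q A q))
           (SIGMA B:{B. subgroup B A \<and> B \<noteq> carrier A}. Z1_incl A B)
           (FAC A)"
proof -
  interpret group A by fact
  show ?thesis
    unfolding bij_betw_def
  proof (intro conjI)
    show "inj_on (\<lambda>(B, q). (B, Ker_q A q)) (SIGMA B:{B. subgroup B A \<and> B \<noteq> carrier A}. Z1_incl A B)"
      by (auto intro!: inj_onI dest: z1_inj)
    show "(\<lambda>(B, q). (B, Ker_q A q)) ` (SIGMA B:{B. subgroup B A \<and> B \<noteq> carrier A}. Z1_incl A B) = FAC A"
    proof
      show "(\<lambda>(B, q). (B, Ker_q A q)) ` (SIGMA B:{B. subgroup B A \<and> B \<noteq> carrier A}. Z1_incl A B) \<subseteq> FAC A"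
        using z1_fac by auto
      show "FAC A \<subseteq> (\<lambda>(B, q). (B, Ker_q A q)) ` (SIGMA B:{B. subgroup B A \<and> B \<noteq> carrier A}. Z1_incl A B)"
      proof
        fix p assume p: "p \<in> FAC A"
        obtain B K where pe: "p = (B, K)" by (cases p)
        then obtain q where q: "q \<in> Z1_incl A B" "Ker_q A q = K" using fac_surj p by blast
        have "subgroup B A \<and> B \<noteq> carrier A" using p pe unfolding FAC_def by auto
        thus "p \<in> (\<lambda>(B, q). (B, Ker_q A q)) ` (SIGMA B:{B. subgroup B A \<and> B \<noteq> carrier A}. Z1_incl A B)"
          using q pe by (auto intro!: image_eqI[where x="(B, q)"])
      qed
    qed
  qed
qed

end
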